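(* Let $K(x,y)=\dfrac{\log\frac{|x-y|}{\langle x\rangle}}{1+\log\langle y\rangle}$ for $x,y\in\mathbb{R}^2$. For any $p\in[1,\infty)$ and $\varepsilon>0$ there exist a function $W(x,y)\ge0$ with $\|W\|_{L^\infty_yL^p_x}\le\varepsilon$ and a constant $C_0$ such that $|K(x,y)|\le C_0+W(x,y)$ for all $(x,y)\in\mathbb{R}^{2+2}$.
   Context: $\langle x\rangle=(1+|x|^2)^{1/2}$; $\|W\|_{L^\infty_yL^p_x}=\sup_y\|W(\cdot,y)\|_{L^p(\mathbb{R}^2)}$. *)

theory Defs
  imports "HOL-Analysis.Analysis"
begin

definition jbr :: "real^2 \<Rightarrow> real" where
  "jbr x = sqrt (1 + (norm x)\<^sup>2)"

definition K_kernel :: "real^2 \<Rightarrow> real^2 \<Rightarrow> real" where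
  "K_kernel x y = ln (norm (x - y) / jbr x) / (1 + ln (jbr y))"

definition Lp_pow_x :: "real \<Rightarrow> (real^2 \<Rightarrow> real) \<Rightarrow> ennreal" where
  "Lp_pow_x p f = (\<integral>\<^sup>+ x. ennreal (\<bar>f x\<bar> powr p) \<partial>lborel)"

end

theory Submission
  imports Defs
begin

lemma jbr_ge1: "jbr x \<ge> 1"
  unfolding jbr_def by simp
lemma jbr_ge_norm: "norm x \<le> jbr x"
  unfolding jbr_def by (simp add: real_le_rsqrt)
lemma jbr_le: "jbr x \<le> 1 + norm x"
  unfolding jbr_def by (rule real_sqrt_le_iff'[THEN iffD2]) (auto simp: power2_eq_square algebra_simps)

lemma kernel_bound:
  fixes x y :: "real^2" and N :: nat
  assumes "x \<noteq> y"
  shows "\<bar>K_kernel x y\<bar> \<le> (real N + 2) + (if norm (x - y) < exp (- real N) then - ln (norm (x - y)) else 0)"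
proof -
  define d where "d = norm (x - y)"
  define a where "a = jbr x"
  define b where "b = jbr y"
  define L where "L = 1 + ln b"
  define W where "W = (if d < exp (- real N) then - ln d else 0)"
  have d0: "d > 0" using assms by (simp add: d_def)
  have a1: "a \<ge> 1" "b \<ge> 1" using jbr_ge1 by (auto simp: a_def b_def)
  have lb: "ln b \<ge> 0" using a1 by simp
  have L1: "L \<ge> 1" using lb by (simp add: L_def)
  have dle: "d \<le> norm x + norm y" unfolding d_def by (rule norm_triangle_ineq4)
  have nx: "norm x \<le> norm y + d" unfolding d_def by (metis norm_triangle_sub add.commute)
  have xa: "norm x \<le> a" "norm y \<le> b" using jbr_ge_norm by (auto simp: a_def b_def)
  have ax: "a \<le> 1 + norm x" using jbr_le by (simp add: a_def)
  have W0: "W \<ge> 0"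
  proof (cases "d < exp (- real N)")
    case True
    have "exp (- real N) \<le> 1" by simp
    hence "d \<le> 1" using True by linarith
    hence "ln d \<le> 0" using d0 by simp
    then show ?thesis using True by (simp add: W_def)
  qed (simp add: W_def)
  have K: "K_kernel x y = (ln d - ln a) / L"
    using d0 a1 by (simp add: K_kernel_def d_def a_def b_def L_def ln_div)
  have ln2: "ln 2 \<le> (1::real)" using ln_le_minus_one[of 2] by simp
  have ln3: "ln 3 \<le> (2::real)" using ln_le_minus_one[of 3] by simp
  have up: "ln d - ln a \<le> L * (real N + 2 + W)"
  proof -
    have p1: "(a-1)*(b-1) \<ge> 0" using a1 by simp
    have p2: "a*b \<ge> 1" using mult_mono[of 1 a 1 b] a1 by simp
    have "d \<le> 2 * a * b" using dle xa p1 p2 by (simp add: algebra_simps)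
    hence "ln d \<le> ln (2 * a * b)" using d0 by simp
    also have "\<dots> = ln 2 + ln a + ln b" using a1 by (simp add: ln_mult)
    finally have "ln d - ln a \<le> L" using ln2 by (simp add: L_def)
    also have "L \<le> L * (real N + 2 + W)" using L1 W0 by (simp add: mult_le_cancel_left1)
    finally show ?thesis .
  qed
  have lo: "ln a - ln d \<le> L * (real N + 2 + W)"
  proof (cases "d < exp (- real N)")
    case True
    have "exp (- real N) \<le> 1" by simp
    hence "a \<le> 3 * b" using True ax nx xa a1 by linarith
    hence "ln a \<le> ln (3 * b)" using a1 by simp
    also have "\<dots> = ln 3 + ln b" using a1 by (simp add: ln_mult)
    finally have "ln a \<le> 2 * L" using ln3 lb by (simp add: L_def)
    moreover have "- ln d \<le> L * W"
    proof -
      have "0 \<le> - ln d" using True W0 by (simp add: W_def)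
      hence "1 * (- ln d) \<le> L * (- ln d)" using L1 by (intro mult_right_mono) auto
      thus ?thesis using True by (simp add: W_def)
    qed
    ultimately have "ln a - ln d \<le> 2 * L + L * W" by simp
    also have "\<dots> \<le> L * (real N + 2 + W)" using L1 by (simp add: algebra_simps)
    finally show ?thesis .
  next
    case False
    have "exp (real N) * exp (- real N) \<le> exp (real N) * d"
      using False by (intro mult_left_mono) auto
    hence ed: "exp (real N) * d \<ge> 1" by (simp add: exp_minus)
    have eN: "exp (real N) \<ge> 1" by simp
    have "a \<le> 1 + b + d" using ax nx xa by linarith
    also have "\<dots> \<le> (3 * b * exp (real N)) * d"
    proof -
      have "2 * b \<le> (2 * b) * (exp (real N) * d)" using ed a1
        by (simp add: mult_le_cancel_left1)
      hence "1 + b \<le> (2 * b) * (exp (real N) * d)" using a1 by linarith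
      moreover have "1 \<le> b * exp (real N)" using mult_mono[of 1 b 1 "exp (real N)"] a1 eN by simp
      hence "d \<le> b * exp (real N) * d" using d0 by (simp add: mult_le_cancel_right1)
      ultimately show ?thesis by (simp add: algebra_simps)
    qed
    finally have "ln a \<le> ln (3 * b * exp (real N) * d)"
      using a1 d0 by simp
    also have "\<dots> = ln (3 * b * exp (real N)) + ln d" using a1 d0 by (simp add: ln_mult)
    finally have "ln a \<le> ln (3 * b * exp (real N)) + ln d" .
    also have "ln (3 * b * exp (real N)) = ln 3 + ln b + real N" using a1 by (simp add: ln_mult)
    finally have "ln a - ln d \<le> real N + 2 + ln b" using ln3 by simp
    also have "\<dots> \<le> L * (real N + 2)" using lb by (simp add: L_def algebra_simps)
    also have "\<dots> \<le> L * (real N + 2 + W)" using L1 W0 by simp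
    finally show ?thesis .
  qed
  have "\<bar>(ln d - ln a) / L\<bar> = \<bar>ln d - ln a\<bar> / L" using L1 by simp
  also have "\<dots> \<le> real N + 2 + W" using up lo L1 by (simp add: divide_le_eq abs_le_iff mult.commute)
  finally have "\<bar>K_kernel x y\<bar> \<le> real N + 2 + W" by (simp only: K)
  thus ?thesis by (simp only: W_def d_def)
qed

lemma summ: "summable (\<lambda>k::nat. pi * ((real k + 1) powr p * exp (-2 * real k)))"
proof (cases "p \<le> 0")
  case True
  have e1: "norm (exp (- 2) :: real) < 1"
    using exp_less_cancel_iff[of "-2::real" 0] by simp
  have g: "summable (\<lambda>k::nat. (exp (- 2) :: real) ^ k)" by (rule summable_geometric[OF e1])
  have g2: "summable (\<lambda>k::nat. exp (-2 * real k))"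
    using g by (simp add: exp_of_nat_mult[symmetric] mult.commute)
  have "norm ((real k + 1) powr p * exp (-2 * real k)) \<le> exp (-2 * real k)" for k :: nat
  proof -
    have "(real k + 1) powr p \<le> (real k + 1) powr 0" using True by (intro powr_mono) auto
    thus ?thesis by simp
  qed
  hence "summable (\<lambda>k::nat. (real k + 1) powr p * exp (-2 * real k))"
    by (intro summable_comparison_test[OF _ g2]) auto
  thus ?thesis by (rule summable_mult)
next
  case False
  hence p: "p > 0" by simp
  have e1: "norm (exp (- 1) :: real) < 1"
    using exp_less_cancel_iff[of "-1::real" 0] by simp
  have g: "summable (\<lambda>k::nat. (exp (- 1) :: real) ^ k)" by (rule summable_geometric[OF e1])
  have g2: "summable (\<lambda>k::nat. (p powr p * exp 1) * exp (- real k))"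
    using g by (intro summable_mult) (simp add: exp_of_nat_mult[symmetric])
  have bnd: "norm ((real k + 1) powr p * exp (-2 * real k)) \<le> (p powr p * exp 1) * exp (- real k)" for k :: nat
  proof -
    have "(real k + 1) / p \<le> exp ((real k + 1) / p)"
      using exp_ge_add_one_self[of "(real k + 1) / p"] by linarith
    hence a: "real k + 1 \<le> p * exp ((real k + 1) / p)" using p by (simp add: field_simps)
    have "(real k + 1) powr p \<le> (p * exp ((real k + 1) / p)) powr p"
      using a p by (intro powr_mono2) auto
    also have "\<dots> = p powr p * exp (real k + 1)"
      using p by (simp add: powr_def ln_mult exp_add[symmetric] distrib_left field_simps)
    finally have b: "(real k + 1) powr p \<le> p powr p * exp (real k + 1)" .
    have "(real k + 1) powr p * exp (-2 * real k) \<le> p powr p * exp (real k + 1) * exp (-2 * real k)"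
      using b by (intro mult_right_mono) auto
    also have "\<dots> = (p powr p * exp 1) * exp (- real k)"
      by (simp add: mult.assoc exp_add[symmetric])
    finally show ?thesis by simp
  qed
  have "summable (\<lambda>k::nat. (real k + 1) powr p * exp (-2 * real k))"
    by (rule summable_comparison_test[OF _ g2]) (use bnd in auto)
  thus ?thesis by (rule summable_mult)
qed

lemma term_le_suminf: "(f :: nat \<Rightarrow> ennreal) n \<le> (\<Sum>i. f i)"
proof -
  have "(\<Sum>i\<in>{n}. f i) \<le> suminf f" by (rule sum_le_suminf[OF summableI]) auto
  thus ?thesis by simp
qed

lemma int_bound:
  fixes y :: "real^2" and N :: nat
  assumes p: "0 \<le> p"
  shows "Lp_pow_x p (\<lambda>x. if norm (x - y) < exp (- real N) then - ln (norm (x - y)) else 0)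
     \<le> ennreal (\<Sum>n. pi * ((real (n + N) + 1) powr p * exp (-2 * real (n + N))))"
proof -
  define W where "W x = (if norm (x - y) < exp (- real N) then - ln (norm (x - y)) else 0)" for x
  define g where "g n x = ennreal ((real (n + N) + 1) powr p) * indicator (cball y (exp (- real (n + N)))) x" for n x
  have pw: "ennreal (\<bar>W x\<bar> powr p) \<le> (\<Sum>n. g n x)" for x
  proof (cases "norm (x - y) < exp (- real N) \<and> x \<noteq> y")
    case True
    define d where "d = norm (x - y)"
    have d0: "d > 0" using True by (simp add: d_def)
    have dN: "d < exp (- real N)" using True by (simp add: d_def)
    have "ln d < ln (exp (- real N))" using dN d0 by (subst ln_less_cancel_iff) auto
    hence lnN: "- ln d > real N" by simp
    define m where "m = nat \<lfloor>- ln d\<rfloor>"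
    have fi: "\<lfloor>- ln d\<rfloor> \<ge> 0" using lnN by simp
    have rm: "real m = real_of_int \<lfloor>- ln d\<rfloor>" using fi by (simp add: m_def)
    have fl: "real m \<le> - ln d" "- ln d < real m + 1"
      using rm of_int_floor_le[of "- ln d"] real_of_int_floor_add_one_gt[of "- ln d"] by linarith+
    have mN: "N \<le> m" using lnN fl by linarith
    have "exp (ln d) \<le> exp (- real m)" using fl by simp
    hence dm: "d \<le> exp (- real m)" using d0 by simp
    have W: "\<bar>W x\<bar> = - ln d" using True lnN by (simp add: W_def d_def)
    have "\<bar>W x\<bar> powr p \<le> (real m + 1) powr p"
      unfolding W using fl lnN p by (intro powr_mono2) auto
    also have "\<dots> = (real ((m - N) + N) + 1) powr p" using mN by simp
    finally have "ennreal (\<bar>W x\<bar> powr p) \<le> g (m - N) x"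
      using mN dm by (simp add: g_def d_def dist_norm norm_minus_commute ennreal_leI)
    also have "\<dots> \<le> (\<Sum>n. g n x)" by (rule term_le_suminf)
    finally show ?thesis .
  next
    case False
    hence "W x = 0" by (auto simp: W_def)
    thus ?thesis using p by simp
  qed
  have "Lp_pow_x p W \<le> (\<integral>\<^sup>+ x. (\<Sum>n. g n x) \<partial>lborel)"
    unfolding Lp_pow_x_def by (rule nn_integral_mono) (rule pw)
  also have "\<dots> = (\<Sum>n. \<integral>\<^sup>+ x. g n x \<partial>lborel)"
  proof (rule nn_integral_suminf)
    fix n
    have cb: "cball y (exp (- real (n + N))) \<in> sets lborel" by simp
    have "(\<lambda>x. g n x) \<in> borel_measurable lborel"
      unfolding g_def using cb by (intro borel_measurable_times_ennreal borel_measurable_const borel_measurable_indicator)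
    thus "g n \<in> borel_measurable lborel" by simp
  qed
  also have "\<dots> = (\<Sum>n. ennreal (pi * ((real (n + N) + 1) powr p * exp (-2 * real (n + N)))))"
  proof (rule suminf_cong)
    fix n
    have "(\<integral>\<^sup>+ x. g n x \<partial>lborel) = ennreal ((real (n + N) + 1) powr p) * emeasure lborel (cball y (exp (- real (n + N))))"
      unfolding g_def by (rule nn_integral_cmult_indicator) simp
    also have "\<dots> = ennreal (pi * ((real (n + N) + 1) powr p * exp (-2 * real (n + N))))"
      by (simp add: emeasure_cball unit_ball_vol_2 ennreal_mult'[symmetric] power2_eq_square exp_add[symmetric] algebra_simps)
    finally show "(\<integral>\<^sup>+ x. g n x \<partial>lborel) = ennreal (pi * ((real (n + N) + 1) powr p * exp (-2 * real (n + N))))" .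
  qed
  also have "\<dots> = ennreal (\<Sum>n. pi * ((real (n + N) + 1) powr p * exp (-2 * real (n + N))))"
  proof (rule suminf_ennreal2)
    show "summable (\<lambda>n. pi * ((real (n + N) + 1) powr p * exp (-2 * real (n + N))))"
      by (rule summable_ignore_initial_segment[OF summ])
  qed simp
  finally show ?thesis unfolding W_def .
qed

theorem lemma2p3:
  fixes p \<epsilon> :: real
  assumes "1 \<le> p" and "\<epsilon> > 0"
  shows "\<exists>(W :: real^2 \<Rightarrow> real^2 \<Rightarrow> real) (C0 :: real).
           (\<forall>x y. 0 \<le> W x y)
         \<and> (\<forall>y. (\<lambda>x. W x y) \<in> borel_measurable lborel)
         \<and> (\<forall>y. Lp_pow_x p (\<lambda>x. W x y) \<le> ennreal (\<epsilon> powr p))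
         \<and> (\<forall>x y. x \<noteq> y \<longrightarrow> \<bar>K_kernel x y\<bar> \<le> C0 + W x y)"
proof -
  have ep: "\<epsilon> powr p > 0" using assms by simp
  obtain N where N: "\<forall>n\<ge>N. norm (\<Sum>i. pi * ((real (i + n) + 1) powr p * exp (-2 * real (i + n)))) < \<epsilon> powr p"
    using suminf_exist_split[OF ep summ[of p]] by blast
  define W where "W x y = (if norm (x - y) < exp (- real N) then - ln (norm (x - y)) else 0)"
    for x y :: "real^2"
  have W0: "0 \<le> W x y" for x y
  proof (cases "norm (x - y) < exp (- real N)")
    case True
    have "exp (- real N) \<le> 1" by simp
    hence "norm (x - y) \<le> 1" using True by linarith
    hence "ln (norm (x - y)) \<le> 0" by (cases "x = y") auto
    then show ?thesis using True by (simp add: W_def)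
  qed (simp add: W_def)
  have meas: "(\<lambda>x. W x y) \<in> borel_measurable lborel" for y
    unfolding W_def by measurable
  have int: "Lp_pow_x p (\<lambda>x. W x y) \<le> ennreal (\<epsilon> powr p)" for y
  proof -
    have "Lp_pow_x p (\<lambda>x. W x y)
       \<le> ennreal (\<Sum>n. pi * ((real (n + N) + 1) powr p * exp (-2 * real (n + N))))"
      unfolding W_def by (rule int_bound) (use assms in simp)
    also have "\<dots> \<le> ennreal (\<epsilon> powr p)"
      using N by (intro ennreal_leI) auto
    finally show ?thesis .
  qed
  have kb: "\<bar>K_kernel x y\<bar> \<le> (real N + 2) + W x y" if "x \<noteq> y" for x y
    unfolding W_def by (rule kernel_bound[OF that])
  have "(\<forall>x y. 0 \<le> W x y)
         \<and> (\<forall>y. (\<lambda>x. W x y) \<in> borel_measurable lborel)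
         \<and> (\<forall>y. Lp_pow_x p (\<lambda>x. W x y) \<le> ennreal (\<epsilon> powr p))
         \<and> (\<forall>x y. x \<noteq> y \<longrightarrow> \<bar>K_kernel x y\<bar> \<le> (real N + 2) + W x y)"
    using W0 meas int kb by simp
  then show ?thesis by (intro exI)
qed

end
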